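(* Let $\mathcal M$ be a Polish metric structure and $\mathcal N$ a countable approximating substructure of $\mathcal M$. For every open $U\subseteq\mathrm{Aut}(\mathcal M)$, the set $U\cap\mathrm{Aut}(\mathcal N)$ is open in $\mathrm{Aut}(\mathcal N)$.
   Context: A metric structure $\mathcal M$ is a complete bounded metric space $(M,d)$ with a family of uniformly continuous bounded predicates $P_i\colon M^{k_i}\to\mathbb R$ (including $d$) and uniformly continuous functions $f_j\colon M^{\ell_j}\to M$; it is Polish if $M$ is separable. Automorphisms are bijections preserving all predicates and functions; $\mathrm{Aut}(\mathcal M)$ carries the topology of pointwise convergence on $(M,d)$. A countable (classical) structure $\mathcal N$ is a countable approximating substructure of $\mathcal M$ if its universe $N$ is a countable dense subset of $(M,d)$, every automorphism of $\mathcal N$ extends to an automorphism of $\mathcal M$, and (via this extension) $\mathrm{Aut}(\mathcal N)$ is dense in $\mathrm{Aut}(\mathcal M)$. $\mathrm{Aut}(\mathcal N)$ carries the topology of pointwise convergence on the discrete set $N$, and is regarded as a subset of $\mathrm{Aut}(\mathcal M)$ via the extension. *)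

theory Defs
  imports "HOL-Analysis.Analysis"
begin

definition tuples :: "'a set \<Rightarrow> nat \<Rightarrow> 'a list set" where
  "tuples M k = {xs. length xs = k \<and> set xs \<subseteq> M}"

definition ucont_on_tuples :: "'a::metric_space set \<Rightarrow> nat \<Rightarrow> ('a list \<Rightarrow> 'b::metric_space) \<Rightarrow> bool" where
  "ucont_on_tuples M k f \<longleftrightarrow>
     (\<forall>e>0. \<exists>d>0. \<forall>xs\<in>tuples M k. \<forall>ys\<in>tuples M k.
        (\<forall>i<k. dist (xs ! i) (ys ! i) < d) \<longrightarrow> dist (f xs) (f ys) < e)"

definition metric_structure ::
  "'a::metric_space set \<Rightarrow> ('i \<Rightarrow> nat) \<Rightarrow> ('i \<Rightarrow> 'a list \<Rightarrow> real)
    \<Rightarrow> ('j \<Rightarrow> nat) \<Rightarrow> ('j \<Rightarrow> 'a list \<Rightarrow> 'a) \<Rightarrow> bool" where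
  "metric_structure M k P l F \<longleftrightarrow>
     complete M \<and> bounded M \<and>
     (\<forall>i. ucont_on_tuples M (k i) (P i) \<and> bounded (P i ` tuples M (k i))) \<and>
     (\<exists>i. k i = 2 \<and> (\<forall>x\<in>M. \<forall>y\<in>M. P i [x, y] = dist x y)) \<and>
     (\<forall>j. ucont_on_tuples M (l j) (F j) \<and> F j ` tuples M (l j) \<subseteq> M)"

definition polish_metric_structure ::
  "'a::metric_space set \<Rightarrow> ('i \<Rightarrow> nat) \<Rightarrow> ('i \<Rightarrow> 'a list \<Rightarrow> real)
    \<Rightarrow> ('j \<Rightarrow> nat) \<Rightarrow> ('j \<Rightarrow> 'a list \<Rightarrow> 'a) \<Rightarrow> bool" where
  "polish_metric_structure M k P l F \<longleftrightarrow>
     metric_structure M k P l F \<and> (\<exists>C. countable C \<and> C \<subseteq> M \<and> M \<subseteq> closure C)"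

definition metric_aut ::
  "'a::metric_space set \<Rightarrow> ('i \<Rightarrow> nat) \<Rightarrow> ('i \<Rightarrow> 'a list \<Rightarrow> real)
    \<Rightarrow> ('j \<Rightarrow> nat) \<Rightarrow> ('j \<Rightarrow> 'a list \<Rightarrow> 'a) \<Rightarrow> ('a \<Rightarrow> 'a) set" where
  "metric_aut M k P l F =
     {g \<in> M \<rightarrow>\<^sub>E M. bij_betw g M M \<and>
        (\<forall>i. \<forall>xs\<in>tuples M (k i). P i (map g xs) = P i xs) \<and>
        (\<forall>j. \<forall>xs\<in>tuples M (l j). g (F j xs) = F j (map g xs))}"

definition metric_aut_top ::
  "'a::metric_space set \<Rightarrow> ('i \<Rightarrow> nat) \<Rightarrow> ('i \<Rightarrow> 'a list \<Rightarrow> real)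
    \<Rightarrow> ('j \<Rightarrow> nat) \<Rightarrow> ('j \<Rightarrow> 'a list \<Rightarrow> 'a) \<Rightarrow> ('a \<Rightarrow> 'a) topology" where
  "metric_aut_top M k P l F =
     subtopology (product_topology (\<lambda>_. top_of_set M) M) (metric_aut M k P l F)"

text \<open>A classical structure on universe N: relations R r of arity ra r and
  functions G s of arity fa s (constants = 0-ary functions).\<close>
definition classical_structure ::
  "'a set \<Rightarrow> ('r \<Rightarrow> nat) \<Rightarrow> ('r \<Rightarrow> 'a list \<Rightarrow> bool)
    \<Rightarrow> ('s \<Rightarrow> nat) \<Rightarrow> ('s \<Rightarrow> 'a list \<Rightarrow> 'a) \<Rightarrow> bool" where
  "classical_structure N ra R fa G \<longleftrightarrow> (\<forall>s. G s ` tuples N (fa s) \<subseteq> N)"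

definition struct_aut ::
  "'a set \<Rightarrow> ('r \<Rightarrow> nat) \<Rightarrow> ('r \<Rightarrow> 'a list \<Rightarrow> bool)
    \<Rightarrow> ('s \<Rightarrow> nat) \<Rightarrow> ('s \<Rightarrow> 'a list \<Rightarrow> 'a) \<Rightarrow> ('a \<Rightarrow> 'a) set" where
  "struct_aut N ra R fa G =
     {\<sigma> \<in> N \<rightarrow>\<^sub>E N. bij_betw \<sigma> N N \<and>
        (\<forall>r. \<forall>xs\<in>tuples N (ra r). R r (map \<sigma> xs) \<longleftrightarrow> R r xs) \<and>
        (\<forall>s. \<forall>xs\<in>tuples N (fa s). \<sigma> (G s xs) = G s (map \<sigma> xs))}"

definition struct_aut_top ::
  "'a set \<Rightarrow> ('r \<Rightarrow> nat) \<Rightarrow> ('r \<Rightarrow> 'a list \<Rightarrow> bool)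
    \<Rightarrow> ('s \<Rightarrow> nat) \<Rightarrow> ('s \<Rightarrow> 'a list \<Rightarrow> 'a) \<Rightarrow> ('a \<Rightarrow> 'a) topology" where
  "struct_aut_top N ra R fa G =
     subtopology (product_topology (\<lambda>_. discrete_topology N) N) (struct_aut N ra R fa G)"

text \<open>The (unique) automorphism of the metric structure extending sigma.\<close>
definition aut_ext :: "('a \<Rightarrow> 'a) set \<Rightarrow> 'a set \<Rightarrow> ('a \<Rightarrow> 'a) \<Rightarrow> ('a \<Rightarrow> 'a)" where
  "aut_ext AutM N \<sigma> = (THE g. g \<in> AutM \<and> (\<forall>x\<in>N. g x = \<sigma> x))"

definition countable_approx_sub ::
  "'a::metric_space set \<Rightarrow> ('i \<Rightarrow> nat) \<Rightarrow> ('i \<Rightarrow> 'a list \<Rightarrow> real)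
    \<Rightarrow> ('j \<Rightarrow> nat) \<Rightarrow> ('j \<Rightarrow> 'a list \<Rightarrow> 'a)
    \<Rightarrow> 'a set \<Rightarrow> ('r \<Rightarrow> nat) \<Rightarrow> ('r \<Rightarrow> 'a list \<Rightarrow> bool)
    \<Rightarrow> ('s \<Rightarrow> nat) \<Rightarrow> ('s \<Rightarrow> 'a list \<Rightarrow> 'a) \<Rightarrow> bool" where
  "countable_approx_sub M k P l F N ra R fa G \<longleftrightarrow>
     classical_structure N ra R fa G \<and>
     countable N \<and> N \<subseteq> M \<and> M \<subseteq> closure N \<and>
     (\<forall>\<sigma>\<in>struct_aut N ra R fa G. \<exists>g\<in>metric_aut M k P l F. \<forall>x\<in>N. g x = \<sigma> x) \<and>
     (metric_aut_top M k P l F) closure_of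
        (aut_ext (metric_aut M k P l F) N ` struct_aut N ra R fa G)
       = topspace (metric_aut_top M k P l F)"

end

theory Submission
  imports Defs
begin

lemma aut_isometry:
  assumes ms: "metric_structure M k P l F" and g: "g \<in> metric_aut M k P l F"
    and x: "x \<in> M" and y: "y \<in> M"
  shows "dist (g x) (g y) = dist x y"
proof -
  obtain i where i: "k i = 2" "\<forall>x\<in>M. \<forall>y\<in>M. P i [x, y] = dist x y"
    using ms unfolding metric_structure_def by blast
  have gM: "g x \<in> M" "g y \<in> M" using g x y unfolding metric_aut_def by auto
  have "[x,y] \<in> tuples M (k i)" using i x y by (simp add: tuples_def)
  hence "P i (map g [x,y]) = P i [x,y]" using g unfolding metric_aut_def by blast
  thus ?thesis using i gM x y by simp
qed

lemma aut_unique: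
  assumes ms: "metric_structure M k P l F" and g: "g \<in> metric_aut M k P l F"
    and h: "h \<in> metric_aut M k P l F" and NM: "N \<subseteq> M" "M \<subseteq> closure N"
    and agree: "\<forall>x\<in>N. g x = h x"
  shows "g = h"
proof
  fix x
  show "g x = h x"
  proof (cases "x \<in> M")
    case False
    thus ?thesis using g h unfolding metric_aut_def by (auto simp: PiE_def extensional_def)
  next
    case True
    have "dist (g x) (h x) < e" if e: "e > 0" for e
    proof -
      have "x \<in> closure N" using True NM by blast
      then obtain y where y: "y \<in> N" "dist y x < e/2" using e
        by (metis closure_approachable half_gt_zero)
      have yM: "y \<in> M" using y NM by blast
      have "dist (g x) (h x) \<le> dist (g x) (g y) + dist (h y) (h x)"
        using agree y by (metis dist_triangle)
      also have "\<dots> = dist x y + dist y x"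
        using aut_isometry[OF ms g True yM] aut_isometry[OF ms h yM True] by simp
      also have "\<dots> < e" using y by (simp add: dist_commute)
      finally show ?thesis .
    qed
    thus ?thesis by (metis dist_eq_0_iff dist_nz less_irrefl)
  qed
qed

lemma ext_props:
  assumes ms: "metric_structure M k P l F"
    and ca: "countable_approx_sub M k P l F N ra R fa G"
    and s: "\<sigma> \<in> struct_aut N ra R fa G"
  shows "aut_ext (metric_aut M k P l F) N \<sigma> \<in> metric_aut M k P l F \<and>
         (\<forall>x\<in>N. aut_ext (metric_aut M k P l F) N \<sigma> x = \<sigma> x)"
proof -
  have NM: "N \<subseteq> M" "M \<subseteq> closure N" using ca unfolding countable_approx_sub_def by auto
  obtain g where g: "g \<in> metric_aut M k P l F" "\<forall>x\<in>N. g x = \<sigma> x"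
    using ca s unfolding countable_approx_sub_def by blast
  have "\<exists>!g. g \<in> metric_aut M k P l F \<and> (\<forall>x\<in>N. g x = \<sigma> x)"
  proof (rule ex1I[of _ g])
    show "g \<in> metric_aut M k P l F \<and> (\<forall>x\<in>N. g x = \<sigma> x)" using g by blast
    fix h assume "h \<in> metric_aut M k P l F \<and> (\<forall>x\<in>N. h x = \<sigma> x)"
    thus "h = g" using aut_unique[OF ms _ g(1) NM] g(2) by auto
  qed
  thus ?thesis unfolding aut_ext_def by (rule theI')
qed

theorem lemma5p5:
  fixes M :: "'a::metric_space set"
    and k :: "'i \<Rightarrow> nat" and P :: "'i \<Rightarrow> 'a list \<Rightarrow> real"
    and l :: "'j \<Rightarrow> nat" and F :: "'j \<Rightarrow> 'a list \<Rightarrow> 'a"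
    and N :: "'a set"
    and ra :: "'r \<Rightarrow> nat" and R :: "'r \<Rightarrow> 'a list \<Rightarrow> bool"
    and fa :: "'s \<Rightarrow> nat" and G :: "'s \<Rightarrow> 'a list \<Rightarrow> 'a"
    and U :: "('a \<Rightarrow> 'a) set"
  assumes "polish_metric_structure M k P l F"
    and "countable_approx_sub M k P l F N ra R fa G"
    and "openin (metric_aut_top M k P l F) U"
  shows "openin (struct_aut_top N ra R fa G)
           {\<sigma> \<in> struct_aut N ra R fa G. aut_ext (metric_aut M k P l F) N \<sigma> \<in> U}"
proof -
  let ?A = "metric_aut M k P l F"
  let ?S = "struct_aut N ra R fa G"
  let ?E = "aut_ext ?A N"
  have ms: "metric_structure M k P l F" using assms(1) unfolding polish_metric_structure_def by blast
  have ca: "countable_approx_sub M k P l F N ra R fa G" by fact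
  have NM: "N \<subseteq> M" "M \<subseteq> closure N" using ca unfolding countable_approx_sub_def by auto
  obtain V where V: "openin (product_topology (\<lambda>_. top_of_set M) M) V" "U = V \<inter> ?A"
    using assms(3) unfolding metric_aut_top_def openin_subtopology by blast
  show ?thesis
    unfolding openin_subopen[of _ "{\<sigma> \<in> ?S. ?E \<sigma> \<in> U}"]
  proof
    fix \<sigma> assume "\<sigma> \<in> {\<sigma> \<in> ?S. ?E \<sigma> \<in> U}"
    hence s: "\<sigma> \<in> ?S" and gU: "?E \<sigma> \<in> U" by auto
    define g where "g = ?E \<sigma>"
    have gA: "g \<in> ?A" and gs: "\<forall>x\<in>N. g x = \<sigma> x"
      using ext_props[OF ms ca s] unfolding g_def by auto
    have "g \<in> V" using gU V unfolding g_def by blast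
    then obtain Us where Us: "finite {x \<in> M. Us x \<noteq> M}" "\<forall>x\<in>M. openin (top_of_set M) (Us x)"
        "g \<in> Pi\<^sub>E M Us" "Pi\<^sub>E M Us \<subseteq> V"
      using V(1) unfolding openin_product_topology_alt by auto
    define X where "X = {x \<in> M. Us x \<noteq> M}"
    have "\<forall>x\<in>X. \<exists>e>0. \<forall>z\<in>M. dist z (g x) < e \<longrightarrow> z \<in> Us x"
    proof
      fix x assume x: "x \<in> X"
      hence xM: "x \<in> M" unfolding X_def by auto
      have "g x \<in> Us x" using Us(3) xM by auto
      thus "\<exists>e>0. \<forall>z\<in>M. dist z (g x) < e \<longrightarrow> z \<in> Us x"
        using Us(2) xM unfolding openin_euclidean_subtopology_iff by blast
    qed
    then obtain e where e: "\<forall>x\<in>X. e x > 0 \<and> (\<forall>z\<in>M. dist z (g x) < e x \<longrightarrow> z \<in> Us x)"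
      by metis
    have "\<forall>x\<in>X. \<exists>y\<in>N. dist y x < e x / 2"
    proof
      fix x assume x: "x \<in> X"
      hence "x \<in> closure N" using NM unfolding X_def by auto
      thus "\<exists>y\<in>N. dist y x < e x / 2" using e x by (meson closure_approachable half_gt_zero)
    qed
    then obtain y where y: "\<forall>x\<in>X. y x \<in> N \<and> dist (y x) x < e x / 2" by metis
    define Y where "Y = y ` X"
    have finY: "finite Y" using Us(1) unfolding Y_def X_def by simp
    have YN: "Y \<subseteq> N" using y unfolding Y_def by auto
    define W where "W = Pi\<^sub>E N (\<lambda>z. if z \<in> Y then {\<sigma> z} else N) \<inter> ?S"
    have sN: "\<sigma> \<in> N \<rightarrow>\<^sub>E N" using s unfolding struct_aut_def by blast
    have "openin (product_topology (\<lambda>_. discrete_topology N) N)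
            (Pi\<^sub>E N (\<lambda>z. if z \<in> Y then {\<sigma> z} else N))"
    proof -
      have "{i \<in> N. (if i \<in> Y then {\<sigma> i} else N) \<noteq> topspace (discrete_topology N)} \<subseteq> Y"
        by auto
      hence "finite {i \<in> N. (if i \<in> Y then {\<sigma> i} else N) \<noteq> topspace (discrete_topology N)}"
        using finY finite_subset by blast
      moreover have "\<forall>i\<in>N. openin (discrete_topology N) (if i \<in> Y then {\<sigma> i} else N)"
        using sN by (auto simp: PiE_def)
      ultimately show ?thesis unfolding openin_PiE_gen by blast
    qed
    hence Wo: "openin (struct_aut_top N ra R fa G) W"
      unfolding struct_aut_top_def W_def openin_subtopology by blast
    have sW: "\<sigma> \<in> W" unfolding W_def using s sN by (auto simp: PiE_def Pi_def)
    have "W \<subseteq> {\<sigma> \<in> ?S. ?E \<sigma> \<in> U}"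
    proof
      fix \<tau> assume t: "\<tau> \<in> W"
      hence tS: "\<tau> \<in> ?S" and tY: "\<forall>z\<in>Y. \<tau> z = \<sigma> z" unfolding W_def using YN by (fastforce simp: PiE_def Pi_def)+
      define h where "h = ?E \<tau>"
      have hA: "h \<in> ?A" and hs: "\<forall>x\<in>N. h x = \<tau> x"
        using ext_props[OF ms ca tS] unfolding h_def by auto
      have hM: "h \<in> M \<rightarrow>\<^sub>E M" using hA unfolding metric_aut_def by blast
      have "h \<in> Pi\<^sub>E M Us"
      proof (rule PiE_I)
        fix x assume xM: "x \<in> M"
        show "h x \<in> Us x"
        proof (cases "x \<in> X")
          case False
          thus ?thesis using xM hM unfolding X_def by auto
        next
          case True
          have yx: "y x \<in> N" "dist (y x) x < e x / 2" using y True by auto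
          have yM: "y x \<in> M" using yx NM by blast
          have "y x \<in> Y" using True unfolding Y_def by blast
          hence hy: "h (y x) = g (y x)" using hs gs tY yx by auto
          have "dist (h x) (g x) \<le> dist (h x) (h (y x)) + dist (g (y x)) (g x)"
            using hy by (metis dist_triangle)
          also have "\<dots> = dist x (y x) + dist (y x) x"
            using aut_isometry[OF ms hA xM yM] aut_isometry[OF ms gA yM xM] by simp
          also have "\<dots> < e x" using yx by (simp add: dist_commute)
          finally have "dist (h x) (g x) < e x" .
          moreover have "h x \<in> M" using hM xM by auto
          ultimately show ?thesis using e True by blast
        qed
      next
        fix x assume "x \<notin> M"
        thus "h x = undefined" using hM by auto
      qed
      hence "h \<in> U" using Us(4) V(2) hA by blast
      thus "\<tau> \<in> {\<sigma> \<in> ?S. ?E \<sigma> \<in> U}" using tS unfolding h_def by blast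
    qed
    thus "\<exists>T. openin (struct_aut_top N ra R fa G) T \<and> \<sigma> \<in> T \<and> T \<subseteq> {\<sigma> \<in> ?S. ?E \<sigma> \<in> U}"
      using Wo sW by blast
  qed
qed

end
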